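(* Suppose $N>3$ and let $c_\star$ be any real number with $\frac{n_1\vee n_2}{N-3}\le c_\star$. Then $$\sum_{\alpha\in\Gamma_1}\mathbb E\Big[I_\alpha\sum_{\beta\in\Gamma_1}|I_\beta-J_{\beta\alpha}|\sum_{\gamma\in\Gamma_1}|I_\gamma-J_{\gamma\alpha}|\Big]\le(8c_\star+36c_\star^2)(n_1\vee n_2).$$
   Context: Degree sequence $(d_1,\dots,d_n)$, $N=\sum d_i$ even, $n_k=|\{i:d_i=k\}|$, half-edges $1..N$ with $d_i$ belonging to vertex $v_i$; $\mathfrak g$ a uniform random perfect matching. $\Gamma_{11}$ = sets $\{\{s,t\}\}$, $s\in v_i,t\in v_j$, $i<j$, $d_i=d_j=1$; $\Gamma_{12}$ = sets $\{\{s,u\},\{t,v\}\}$, $s\in v_i,t\in v_j$, $i<j$, $d_i=d_j=1$, $u\ne v\in v_k$, $d_k=2$; $\Gamma_1=\Gamma_{11}\cup\Gamma_{12}$. $I_\alpha=1$ iff all pairs of $\alpha$ lie in $\mathfrak g$. Switching coupling: for $\alpha$ with pairs $\{s_{\ell,1},s_{\ell,2}\}$, $\ell=1..e$, ordered by increasing $s_{\ell,1}\wedge s_{\ell,2}$, independent $B_{\alpha,\ell}$ uniform on $\{1..N-2(e-\ell)-1\}$ (independent of each other over all $\alpha,\ell$ and of $\mathfrak g$); if $I_\alpha=0$ then $\mathfrak g_\alpha=\mathfrak g$; if $I_\alpha=1$, starting from $g_0=\mathfrak g$, for $\ell=1..e$ let $t_{\ell,1}$ be the $B_{\alpha,\ell}$-th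 smallest element of $\{1..N\}\setminus(\{s_{\ell,1}\wedge s_{\ell,2}\}\cup\bigcup_{m>\ell}\{s_{m,1},s_{m,2}\})$, $t_{\ell,2}$ its partner in $g_{\ell-1}$, and replace in $g_{\ell-1}$ the pairs $\{s_{\ell,1},s_{\ell,2}\},\{t_{\ell,1},t_{\ell,2}\}$ by $\{s_{\ell,1}\wedge s_{\ell,2},t_{\ell,1}\},\{s_{\ell,1}\vee s_{\ell,2},t_{\ell,2}\}$ (no change if $t_{\ell,1}=s_{\ell,1}\vee s_{\ell,2}$) to get $g_\ell$; $\mathfrak g_\alpha=g_e$. $J_{\beta\alpha}=1$ iff all pairs of $\beta$ lie in $\mathfrak g_\alpha$. *)

theory Defs
  imports "HOL-Probability.Probability"
begin

(* Degree sequence d 1, ..., d n (vertices indexed 1..n).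
   Half-edges are 1..N, N = d 1 + ... + d n; vertex v_i owns the
   consecutive block of d i half-edges {D(i-1)+1 .. D i}. *)
definition dsum :: "(nat \<Rightarrow> nat) \<Rightarrow> nat \<Rightarrow> nat" where
  "dsum d i = (\<Sum>j=1..i. d j)"

definition half_edges :: "(nat \<Rightarrow> nat) \<Rightarrow> nat \<Rightarrow> nat set" where
  "half_edges d i = {dsum d (i - 1) + 1 .. dsum d i}"

definition cnt :: "nat \<Rightarrow> (nat \<Rightarrow> nat) \<Rightarrow> nat \<Rightarrow> nat" where
  "cnt n d k = card {i \<in> {1..n}. d i = k}"

definition edge :: "nat \<Rightarrow> nat \<Rightarrow> nat \<times> nat" where
  "edge a b = (min a b, max a b)"

definition perfect_matchings :: "nat \<Rightarrow> (nat \<times> nat) set set" where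
  "perfect_matchings N = {g. (\<forall>(a,b)\<in>g. a < b \<and> a \<in> {1..N} \<and> b \<in> {1..N}) \<and>
       (\<forall>x\<in>{1..N}. \<exists>!p. p \<in> g \<and> (x = fst p \<or> x = snd p))}"

definition partner :: "(nat \<times> nat) set \<Rightarrow> nat \<Rightarrow> nat" where
  "partner g x = (THE y. (x, y) \<in> g \<or> (y, x) \<in> g)"

definition Gamma11 :: "nat \<Rightarrow> (nat \<Rightarrow> nat) \<Rightarrow> (nat \<times> nat) set set" where
  "Gamma11 n d = {{edge s t} | s t i j. i \<in> {1..n} \<and> j \<in> {1..n} \<and> i < j \<and>
       d i = 1 \<and> d j = 1 \<and> s \<in> half_edges d i \<and> t \<in> half_edges d j}"

definition Gamma12 :: "nat \<Rightarrow> (nat \<Rightarrow> nat) \<Rightarrow> (nat \<times> nat) set set" where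
  "Gamma12 n d = {{edge s u, edge t v} | s t u v i j k. i \<in> {1..n} \<and> j \<in> {1..n} \<and>
       k \<in> {1..n} \<and> i < j \<and> d i = 1 \<and> d j = 1 \<and> d k = 2 \<and>
       s \<in> half_edges d i \<and> t \<in> half_edges d j \<and>
       u \<in> half_edges d k \<and> v \<in> half_edges d k \<and> u \<noteq> v}"

definition Gamma1 :: "nat \<Rightarrow> (nat \<Rightarrow> nat) \<Rightarrow> (nat \<times> nat) set set" where
  "Gamma1 n d = Gamma11 n d \<union> Gamma12 n d"

definition Ind :: "(nat \<times> nat) set \<Rightarrow> (nat \<times> nat) set \<Rightarrow> real" where
  "Ind alpha g = (if alpha \<subseteq> g then 1 else 0)"

(* one switching step: pair (a,b), a<b, excluded set (later pairs), value B *)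
definition switch_step :: "nat \<Rightarrow> (nat \<times> nat) set \<Rightarrow> nat \<times> nat \<Rightarrow> nat set \<Rightarrow> nat
    \<Rightarrow> (nat \<times> nat) set" where
  "switch_step N g p excl B =
     (let a = fst p; b = snd p;
          t1 = sorted_list_of_set ({1..N} - ({a} \<union> excl)) ! (B - 1);
          t2 = partner g t1
      in if t1 = b then g
         else (g - {edge a b, edge t1 t2}) \<union> {edge a t1, edge b t2})"

(* pairs of alpha ordered by increasing smaller endpoint: ps ! (l-1) is pair number l *)
definition pairs_list :: "(nat \<times> nat) set \<Rightarrow> (nat \<times> nat) list" where
  "pairs_list alpha = map (\<lambda>a. THE p. p \<in> alpha \<and> fst p = a) (sorted_list_of_set (fst ` alpha))"

primrec switch_iter :: "nat \<Rightarrow> (nat \<times> nat) list \<Rightarrow> (nat \<Rightarrow> nat) \<Rightarrow> (nat \<times> nat) set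
    \<Rightarrow> nat \<Rightarrow> (nat \<times> nat) set" where
  "switch_iter N ps Bs g 0 = g"
| "switch_iter N ps Bs g (Suc k) =
     switch_step N (switch_iter N ps Bs g k) (ps ! k)
       (\<Union>q\<in>set (drop (Suc k) ps). {fst q, snd q}) (Bs (Suc k))"

definition switched :: "nat \<Rightarrow> (nat \<times> nat) set \<Rightarrow> (nat \<Rightarrow> nat) \<Rightarrow> (nat \<times> nat) set
    \<Rightarrow> (nat \<times> nat) set" where
  "switched N alpha Bs g =
     (if alpha \<subseteq> g then switch_iter N (pairs_list alpha) Bs g (card alpha) else g)"

definition Jind :: "nat \<Rightarrow> (nat \<times> nat) set \<Rightarrow> (nat \<times> nat) set \<Rightarrow> (nat \<Rightarrow> nat)
    \<Rightarrow> (nat \<times> nat) set \<Rightarrow> real" where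
  "Jind N beta alpha Bs g = (if beta \<subseteq> switched N alpha Bs g then 1 else 0)"

definition B_law :: "nat \<Rightarrow> (nat \<times> nat) set \<Rightarrow> (nat \<Rightarrow> nat) pmf" where
  "B_law N alpha = Pi_pmf {1..card alpha} 0
      (\<lambda>l. pmf_of_set {1..N - 2 * (card alpha - l) - 1})"

definition coupling_law :: "nat \<Rightarrow> (nat \<Rightarrow> nat) \<Rightarrow> nat
    \<Rightarrow> ((nat \<times> nat) set \<times> ((nat \<times> nat) set \<Rightarrow> nat \<Rightarrow> nat)) pmf" where
  "coupling_law N d n = pair_pmf (pmf_of_set (perfect_matchings N))
      (Pi_pmf (Gamma1 n d) (\<lambda>_. 0) (\<lambda>alpha. B_law N alpha))"

end

theory Submission
  imports Defs
begin
lemma dsum_Suc: "dsum d (Suc i) = dsum d i + d (Suc i)"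
  by (simp add: dsum_def)

lemma dsum_mono: "i \<le> j \<Longrightarrow> dsum d i \<le> dsum d j"
  unfolding dsum_def by (intro sum_mono2) auto

lemma dsum_diff: "i \<ge> 1 \<Longrightarrow> dsum d i = dsum d (i - 1) + d i"
  by (cases i) (auto simp: dsum_Suc)

lemma he_unique: "x \<in> half_edges d i \<Longrightarrow> x \<in> half_edges d j \<Longrightarrow> i = j"
proof (rule ccontr)
  assume a: "x \<in> half_edges d i" "x \<in> half_edges d j" "i \<noteq> j"
  { fix i j assume "x \<in> half_edges d i" "x \<in> half_edges d j" "i < j"
    then have "dsum d i \<le> dsum d (j - 1)" using dsum_mono[of i "j - 1" d] by auto
    with \<open>x \<in> half_edges d i\<close> \<open>x \<in> half_edges d j\<close> have False by (auto simp: half_edges_def) }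
  with a show False by (metis linorder_neqE_nat)
qed

lemma he_sub: "i \<le> n \<Longrightarrow> half_edges d i \<subseteq> {1..dsum d n}"
  using dsum_mono[of i n d] by (auto simp: half_edges_def)

lemma card_he: "i \<ge> 1 \<Longrightarrow> card (half_edges d i) = d i"
  using dsum_diff[of i d] by (simp add: half_edges_def)

lemma he1: "i \<ge> 1 \<Longrightarrow> d i = 1 \<Longrightarrow> half_edges d i = {dsum d i}"
  using dsum_diff[of i d] by (auto simp: half_edges_def)

lemma he2: "i \<ge> 1 \<Longrightarrow> d i = 2 \<Longrightarrow> half_edges d i = {dsum d i - 1, dsum d i}"
  using dsum_diff[of i d] by (auto simp: half_edges_def)

definition pend :: "nat \<times> nat \<Rightarrow> nat set" where "pend p = {fst p, snd p}"
definition ends :: "(nat \<times> nat) set \<Rightarrow> nat set" where "ends b = \<Union> (pend ` b)"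

lemma pend_edge[simp]: "pend (edge a b) = {a, b}"
  by (auto simp: pend_def edge_def min_def max_def)

lemma edge_sym: "edge a b = edge b a"
  by (auto simp: edge_def)

lemma edge_id: "a < b \<Longrightarrow> edge a b = (a, b)"
  by (auto simp: edge_def)

lemma PM_iff: "g \<in> perfect_matchings N \<longleftrightarrow>
   (\<forall>p\<in>g. fst p < snd p \<and> fst p \<in> {1..N} \<and> snd p \<in> {1..N}) \<and>
   (\<forall>x\<in>{1..N}. \<exists>p\<in>g. x \<in> pend p) \<and>
   (\<forall>p\<in>g. \<forall>q\<in>g. pend p \<inter> pend q \<noteq> {} \<longrightarrow> p = q)" (is "_ \<longleftrightarrow> ?R")
proof
  assume g: "g \<in> perfect_matchings N"
  have 1: "\<forall>p\<in>g. fst p < snd p \<and> fst p \<in> {1..N} \<and> snd p \<in> {1..N}"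
    using g by (auto simp: perfect_matchings_def)
  moreover have "\<forall>x\<in>{1..N}. \<exists>p\<in>g. x \<in> pend p"
    using g unfolding perfect_matchings_def pend_def by blast
  moreover have "\<forall>p\<in>g. \<forall>q\<in>g. pend p \<inter> pend q \<noteq> {} \<longrightarrow> p = q"
  proof (intro ballI impI)
    fix p q assume pq: "p \<in> g" "q \<in> g" "pend p \<inter> pend q \<noteq> {}"
    then obtain x where x: "x \<in> pend p" "x \<in> pend q" by blast
    have "x \<in> {1..N}" using 1 pq(1) x(1) by (auto simp: pend_def)
    then have "\<exists>!p. p \<in> g \<and> (x = fst p \<or> x = snd p)" using g by (auto simp: perfect_matchings_def)
    then show "p = q" using x pq by (auto simp: pend_def)
  qed
  ultimately show "?R" by blast
next
  assume R: "?R"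
  show "g \<in> perfect_matchings N"
    unfolding perfect_matchings_def mem_Collect_eq
  proof (intro conjI ballI)
    fix p assume "p \<in> g" then show "case p of (a, b) \<Rightarrow> a < b \<and> a \<in> {1..N} \<and> b \<in> {1..N}"
      using R by (auto split: prod.splits)
  next
    fix x :: nat assume x: "x \<in> {1..N}"
    then obtain p where p: "p \<in> g" "x \<in> pend p" using R by blast
    show "\<exists>!p. p \<in> g \<and> (x = fst p \<or> x = snd p)"
    proof (rule ex1I[of _ p])
      show "p \<in> g \<and> (x = fst p \<or> x = snd p)" using p by (auto simp: pend_def)
    next
      fix q assume "q \<in> g \<and> (x = fst q \<or> x = snd q)"
      then show "q = p" using R p by (auto simp: pend_def)
    qed
  qed
qed

lemma PM_pair: "g \<in> perfect_matchings N \<Longrightarrow> p \<in> g \<Longrightarrow> fst p < snd p \<and> fst p \<in> {1..N} \<and> snd p \<in> {1..N}"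
  by (auto simp: PM_iff)

lemma PM_cover: "g \<in> perfect_matchings N \<Longrightarrow> x \<in> {1..N} \<Longrightarrow> \<exists>p\<in>g. x \<in> pend p"
  by (auto simp: PM_iff)

lemma PM_uniq: "g \<in> perfect_matchings N \<Longrightarrow> p \<in> g \<Longrightarrow> q \<in> g \<Longrightarrow> x \<in> pend p \<Longrightarrow> x \<in> pend q \<Longrightarrow> p = q"
  unfolding PM_iff by blast

lemma PM_finite: "finite (perfect_matchings N)"
proof -
  have "perfect_matchings N \<subseteq> Pow ({1..N} \<times> {1..N})"
    by (auto simp: perfect_matchings_def)
  then show ?thesis by (rule finite_subset) auto
qed

lemma PM_elem_finite: "g \<in> perfect_matchings N \<Longrightarrow> finite g"
proof -
  assume "g \<in> perfect_matchings N"
  then have "g \<subseteq> {1..N} \<times> {1..N}" by (auto simp: perfect_matchings_def)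
  then show ?thesis by (rule finite_subset) auto
qed

lemma sib:
  assumes "\<beta> \<in> Gamma1 n d" "w \<in> ends \<beta>" "w \<in> half_edges d k" "d k = 2" "1 \<le> k"
  shows "half_edges d k \<subseteq> ends \<beta>"
  using assms(1) unfolding Gamma1_def
proof
  assume "\<beta> \<in> Gamma11 n d"
  then obtain s t i j where b: "\<beta> = {edge s t}" "d i = 1" "d j = 1" "s \<in> half_edges d i" "t \<in> half_edges d j"
    by (auto simp: Gamma11_def)
  then have "w = s \<or> w = t" using assms(2) by (auto simp: ends_def)
  then have False using b assms(3,4) he_unique by (metis numeral_eq_one_iff semiring_norm(85))
  then show ?thesis ..
next
  assume "\<beta> \<in> Gamma12 n d"
  then obtain s t u v i j k' where b: "\<beta> = {edge s u, edge t v}" "d i = 1" "d j = 1" "d k' = 2" "1 \<le> k'"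
    "s \<in> half_edges d i" "t \<in> half_edges d j" "u \<in> half_edges d k'" "v \<in> half_edges d k'" "u \<noteq> v"
    by (auto simp: Gamma12_def)
  then have w: "w = s \<or> w = t \<or> w = u \<or> w = v" using assms(2) by (auto simp: ends_def)
  have "w \<noteq> s" "w \<noteq> t" using b assms(3,4) he_unique by (metis numeral_eq_one_iff semiring_norm(85))+
  with w have "w = u \<or> w = v" by auto
  then have kk: "k' = k" using b assms(3) he_unique by metis
  have "{u, v} \<subseteq> half_edges d k" using b kk by auto
  moreover have "card (half_edges d k) = 2" using card_he assms by auto
  moreover have "card {u, v} = 2" using b by auto
  moreover have "finite (half_edges d k)" by (simp add: half_edges_def)
  ultimately have "half_edges d k = {u, v}" by (metis card_subset_eq)
  then show ?thesis using b by (auto simp: ends_def)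
qed

lemma share_sub:
  assumes M: "M \<in> perfect_matchings N" and bb: "\<beta> \<in> Gamma1 n d" "\<beta>' \<in> Gamma1 n d"
    and sub: "\<beta> \<subseteq> M" "\<beta>' \<subseteq> M" and y: "y \<in> \<beta>" "y \<in> \<beta>'"
  shows "\<beta> \<subseteq> \<beta>'"
  using bb(1) unfolding Gamma1_def
proof
  assume "\<beta> \<in> Gamma11 n d"
  then show ?thesis using y by (auto simp: Gamma11_def)
next
  assume "\<beta> \<in> Gamma12 n d"
  then obtain s t u v i j k where b: "\<beta> = {edge s u, edge t v}" "d k = 2" "1 \<le> k"
    "u \<in> half_edges d k" "v \<in> half_edges d k"
    by (auto simp: Gamma12_def)
  obtain w where w: "w \<in> half_edges d k" "w \<in> pend y" using b y by auto
  have "w \<in> ends \<beta>'" using w y by (auto simp: ends_def)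
  then have H: "half_edges d k \<subseteq> ends \<beta>'" using sib[OF bb(2) _ w(1) b(2,3)] by auto
  have "edge s u \<in> \<beta>'"
  proof -
    obtain z where z: "z \<in> \<beta>'" "u \<in> pend z" using H b(4) by (auto simp: ends_def)
    have "z = edge s u" using PM_uniq[OF M, of z "edge s u" u] z sub b by auto
    then show ?thesis using z by simp
  qed
  moreover have "edge t v \<in> \<beta>'"
  proof -
    obtain z where z: "z \<in> \<beta>'" "v \<in> pend z" using H b(5) by (auto simp: ends_def)
    have "z = edge t v" using PM_uniq[OF M, of z "edge t v" v] z sub b by auto
    then show ?thesis using z by simp
  qed
  ultimately show ?thesis using b by auto
qed

lemma share:
  assumes M: "M \<in> perfect_matchings N" and bb: "\<beta> \<in> Gamma1 n d" "\<beta>' \<in> Gamma1 n d"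
    and sub: "\<beta> \<subseteq> M" "\<beta>' \<subseteq> M" and y: "y \<in> \<beta>" "y \<in> \<beta>'"
  shows "\<beta> = \<beta>'"
  using share_sub[OF assms] share_sub[OF M bb(2,1) sub(2,1) y(2,1)] by auto

lemma Uniq:
  assumes M: "M \<in> perfect_matchings N" and bb: "\<beta> \<in> Gamma1 n d" "\<beta>' \<in> Gamma1 n d"
    and sub: "\<beta> \<subseteq> M" "\<beta>' \<subseteq> M" and w: "w \<in> ends \<beta>" "w \<in> ends \<beta>'"
  shows "\<beta> = \<beta>'"
proof -
  obtain y y' where "y \<in> \<beta>" "y' \<in> \<beta>'" "w \<in> pend y" "w \<in> pend y'" using w by (auto simp: ends_def)
  moreover then have "y = y'" using PM_uniq[OF M] sub by blast
  ultimately show ?thesis using share[OF M bb sub] by blast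
qed

lemma Gamma1_finite:
  assumes "N = dsum d n"
  shows "finite (Gamma1 n d)"
proof -
  have "Gamma11 n d \<subseteq> Pow ({1..N} \<times> {1..N})"
  proof
    fix x assume "x \<in> Gamma11 n d"
    then obtain s t i j where "x = {edge s t}" "i \<le> n" "j \<le> n" "s \<in> half_edges d i" "t \<in> half_edges d j"
      by (auto simp: Gamma11_def)
    then show "x \<in> Pow ({1..N} \<times> {1..N})" using he_sub[of i n d] he_sub[of j n d] assms
      by (auto simp: edge_def min_def max_def)
  qed
  moreover have "Gamma12 n d \<subseteq> Pow ({1..N} \<times> {1..N})"
  proof
    fix x assume "x \<in> Gamma12 n d"
    then obtain s t u v i j k where "x = {edge s u, edge t v}" "i < j" "j \<le> n" "k \<le> n"
      "s \<in> half_edges d i" "t \<in> half_edges d j" "u \<in> half_edges d k" "v \<in> half_edges d k"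
      by (auto simp: Gamma12_def)
    moreover from this have "i \<le> n" by simp
    ultimately show "x \<in> Pow ({1..N} \<times> {1..N})" using he_sub[of i n d] he_sub[of j n d] he_sub[of k n d] assms
      by (auto simp: edge_def min_def max_def)
  qed
  ultimately show ?thesis unfolding Gamma1_def by (meson finite_Pow_iff finite_SigmaI finite_Un finite_atLeastAtMost finite_subset)
qed

lemma pend_card: "g \<in> perfect_matchings N \<Longrightarrow> p \<in> g \<Longrightarrow> fst p \<noteq> snd p"
  using PM_pair by fastforce

lemma partner_lemma:
  assumes g: "g \<in> perfect_matchings N" and p: "p \<in> g" and x: "x \<in> pend p"
  shows "edge x (partner g x) = p"
proof -
  obtain a b where ab: "p = (a, b)" by force
  have lt: "a < b" using PM_pair[OF g p] ab by auto
  have ex: "\<And>y. (x, y) \<in> g \<or> (y, x) \<in> g \<Longrightarrow> edge x y = p"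
  proof -
    fix y assume "(x, y) \<in> g \<or> (y, x) \<in> g"
    then obtain r where r: "r \<in> g" "r = (x, y) \<or> r = (y, x)" by blast
    then have "x \<in> pend r" by (auto simp: pend_def)
    then have "r = p" using PM_uniq[OF g r(1) p _ x] by simp
    then show "edge x y = p" using r lt ab by (auto simp: edge_def)
  qed
  have other: "\<exists>y. ((x, y) \<in> g \<or> (y, x) \<in> g)" using x p ab by (auto simp: pend_def)
  have uniq: "\<And>y y'. (x, y) \<in> g \<or> (y, x) \<in> g \<Longrightarrow> (x, y') \<in> g \<or> (y', x) \<in> g \<Longrightarrow> y = y'"
  proof -
    fix y y' assume "(x, y) \<in> g \<or> (y, x) \<in> g" "(x, y') \<in> g \<or> (y', x) \<in> g"
    then have "edge x y = edge x y'" using ex by metis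
    then show "y = y'" by (auto simp: edge_def min_def max_def split: if_splits)
  qed
  have "(x, partner g x) \<in> g \<or> (partner g x, x) \<in> g"
    unfolding partner_def using other uniq by (metis (no_types, lifting) theI)
  then show ?thesis using ex by blast
qed

lemma PM_swap2:
  assumes g: "g \<in> perfect_matchings N" and p: "p \<in> g" and q: "q \<in> g" and pq: "p \<noteq> q"
    and pp: "pend p = {a, b}" and qq: "pend q = {c, e}"
  shows "(g - {p, q}) \<union> {edge a c, edge b e} \<in> perfect_matchings N"
proof -
  have dj: "pend p \<inter> pend q = {}" using PM_uniq[OF g p q] pq by blast
  have ab: "a \<noteq> b" using pend_card[OF g p] pp by (auto simp: pend_def doubleton_eq_iff)
  have ce: "c \<noteq> e" using pend_card[OF g q] qq by (auto simp: pend_def doubleton_eq_iff)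
  have rng: "a \<in> {1..N}" "b \<in> {1..N}" "c \<in> {1..N}" "e \<in> {1..N}"
    using PM_pair[OF g p] PM_pair[OF g q] pp qq by (auto simp: pend_def doubleton_eq_iff)
  have dist: "a \<noteq> c" "a \<noteq> e" "b \<noteq> c" "b \<noteq> e" using dj pp qq by auto
  let ?g = "(g - {p, q}) \<union> {edge a c, edge b e}"
  have A: "\<forall>r\<in>?g. fst r < snd r \<and> fst r \<in> {1..N} \<and> snd r \<in> {1..N}"
  proof
    fix r assume r: "r \<in> ?g"
    show "fst r < snd r \<and> fst r \<in> {1..N} \<and> snd r \<in> {1..N}"
    proof (cases "r \<in> g")
      case True then show ?thesis using PM_pair[OF g] by blast
    next
      case False then have "r = edge a c \<or> r = edge b e" using r by blast
      then show ?thesis using rng dist by (auto simp: edge_def min_def max_def)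
    qed
  qed
  have B: "\<forall>x\<in>{1..N}. \<exists>r\<in>?g. x \<in> pend r"
  proof
    fix x assume x: "x \<in> {1..N}"
    then obtain r where r: "r \<in> g" "x \<in> pend r" using PM_cover[OF g] by blast
    show "\<exists>r\<in>?g. x \<in> pend r"
    proof (cases "r = p \<or> r = q")
      case True
      then have "x \<in> {a, b, c, e}" using r pp qq by auto
      then show ?thesis by auto
    next
      case False then show ?thesis using r by blast
    qed
  qed
  have C: "\<forall>r\<in>?g. \<forall>s\<in>?g. pend r \<inter> pend s \<noteq> {} \<longrightarrow> r = s"
  proof (intro ballI impI)
    fix r s assume r: "r \<in> ?g" and s: "s \<in> ?g" and rs: "pend r \<inter> pend s \<noteq> {}"
    then obtain x where x: "x \<in> pend r" "x \<in> pend s" by blast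
    have old: "\<And>r. r \<in> g - {p, q} \<Longrightarrow> x \<in> pend r \<Longrightarrow> x \<notin> {a, b, c, e}"
    proof -
      fix r assume r: "r \<in> g - {p, q}" "x \<in> pend r"
      show "x \<notin> {a, b, c, e}"
      proof
        assume "x \<in> {a, b, c, e}"
        then have "x \<in> pend p \<or> x \<in> pend q" using pp qq by auto
        then show False using PM_uniq[OF g, of r p x] PM_uniq[OF g, of r q x] r p q by auto
      qed
    qed
    show "r = s"
    proof (cases "r \<in> g - {p, q}")
      case rT: True
      show ?thesis
      proof (cases "s \<in> g - {p, q}")
        case True then show ?thesis using rT x PM_uniq[OF g] by blast
      next
        case False
        then have "s = edge a c \<or> s = edge b e" using s by blast
        then have "x \<in> {a, b, c, e}" using x by auto
        then show ?thesis using old[OF rT x(1)] by blast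
      qed
    next
      case rF: False
      then have rr: "r = edge a c \<or> r = edge b e" using r by blast
      then have xr: "x \<in> {a, b, c, e}" using x by auto
      show ?thesis
      proof (cases "s \<in> g - {p, q}")
        case True then show ?thesis using old[OF True x(2)] xr by blast
      next
        case False
        then have "s = edge a c \<or> s = edge b e" using s by blast
        then show ?thesis using rr x dist ab ce by auto
      qed
    qed
  qed
  show ?thesis unfolding PM_iff using A B C by blast
qed

lemma step_lemma:
  assumes g: "g \<in> perfect_matchings N" and p: "p \<in> g" and t: "t \<in> {1..N}" and ta: "t \<noteq> fst p"
    and tdef: "t = sorted_list_of_set ({1..N} - ({fst p} \<union> excl)) ! (B - 1)"
  defines "g' \<equiv> switch_step N g p excl B"
  shows "g' \<in> perfect_matchings N" "g - {p, edge t (partner g t)} \<subseteq> g'"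
    "g - g' \<subseteq> {p, edge t (partner g t)}" "\<forall>y\<in>g' - g. fst p \<in> pend y \<or> snd p \<in> pend y"
proof -
  have gdef: "g' = (if t = snd p then g else (g - {edge (fst p) (snd p), edge t (partner g t)})
      \<union> {edge (fst p) t, edge (snd p) (partner g t)})"
    unfolding g'_def switch_step_def Let_def tdef by simp
  have ep: "edge (fst p) (snd p) = p" using PM_pair[OF g p] edge_id by auto
  have "(g' \<in> perfect_matchings N \<and> g - {p, edge t (partner g t)} \<subseteq> g' \<and>
    g - g' \<subseteq> {p, edge t (partner g t)} \<and> (\<forall>y\<in>g' - g. fst p \<in> pend y \<or> snd p \<in> pend y))"
  proof (cases "t = snd p")
    case True then show ?thesis using gdef g by auto
  next
    case False
    obtain q where q: "q \<in> g" "t \<in> pend q" using PM_cover[OF g t] by blast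
    have eq: "edge t (partner g t) = q" using partner_lemma[OF g q] .
    have pq: "p \<noteq> q" using q ta False by (auto simp: pend_def)
    have g'': "g' = (g - {p, q}) \<union> {edge (fst p) t, edge (snd p) (partner g t)}"
      using gdef False ep eq by simp
    have pq2: "pend q = {t, partner g t}" using eq pend_edge by metis
    have "g' \<in> perfect_matchings N"
      unfolding g'' by (rule PM_swap2[OF g p q(1) pq _ pq2]) (simp add: pend_def)
    then show ?thesis using g'' eq by auto
  qed
  then show "g' \<in> perfect_matchings N" "g - {p, edge t (partner g t)} \<subseteq> g'"
    "g - g' \<subseteq> {p, edge t (partner g t)}" "\<forall>y\<in>g' - g. fst p \<in> pend y \<or> snd p \<in> pend y"
    by auto
qed

lemma card_excl:
  "card (\<Union>q\<in>set xs. {fst q, snd q}) \<le> 2 * length xs"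
proof -
  have "card (\<Union>q\<in>set xs. {fst q, snd q}) \<le> (\<Sum>q\<in>set xs. card {fst q, snd q})"
    by (rule card_UN_le) simp
  also have "\<dots> \<le> (\<Sum>q\<in>set xs. 2)" by (intro sum_mono) (simp add: card_insert_le_m1)
  also have "\<dots> = 2 * card (set xs)" by simp
  also have "\<dots> \<le> 2 * length xs" by (simp add: card_length)
  finally show ?thesis .
qed

lemma invariant:
  assumes g: "g \<in> perfect_matchings N" and ps: "set ps \<subseteq> g" and dps: "distinct ps"
    and Bs: "\<forall>l\<in>{1..length ps}. Bs l \<in> {1..N - 2 * (length ps - l) - 1}"
  shows "k \<le> length ps \<Longrightarrow> switch_iter N ps Bs g k \<in> perfect_matchings N
    \<and> (\<forall>j. k \<le> j \<and> j < length ps \<longrightarrow> ps ! j \<in> switch_iter N ps Bs g k)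
    \<and> (\<exists>T. finite T \<and> card T \<le> k \<and> (\<forall>y\<in>g - switch_iter N ps Bs g k. y \<in> set ps \<or> (\<exists>w\<in>T. w \<in> pend y)))
    \<and> (\<forall>y\<in>switch_iter N ps Bs g k - g. \<exists>p\<in>set ps. fst p \<in> pend y \<or> snd p \<in> pend y)"
proof (induction k)
  case 0
  have "\<forall>j. j < length ps \<longrightarrow> ps ! j \<in> g" using ps by auto
  then show ?case using g by (auto intro: exI[of _ "{}"])
next
  case (Suc k)
  define L where "L = length ps"
  define gk where "gk = switch_iter N ps Bs g k"
  have IH: "gk \<in> perfect_matchings N"
    "\<forall>j. k \<le> j \<and> j < L \<longrightarrow> ps ! j \<in> gk"
    "\<exists>T. finite T \<and> card T \<le> k \<and> (\<forall>y\<in>g - gk. y \<in> set ps \<or> (\<exists>w\<in>T. w \<in> pend y))"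
    "\<forall>y\<in>gk - g. \<exists>p\<in>set ps. fst p \<in> pend y \<or> snd p \<in> pend y"
    using Suc unfolding gk_def L_def by auto
  have kL: "k < L" using Suc L_def by auto
  define p where "p = ps ! k"
  have pin: "p \<in> gk" using IH(2) kL p_def by auto
  have pset: "p \<in> set ps" using kL p_def L_def by auto
  define excl where "excl = (\<Union>q\<in>set (drop (Suc k) ps). {fst q, snd q})"
  define S where "S = {1..N} - ({fst p} \<union> excl)"
  define B where "B = Bs (Suc k)"
  have Brange: "B \<in> {1..N - 2 * (L - Suc k) - 1}" using Bs kL unfolding B_def L_def by auto
  have ce: "card excl \<le> 2 * (L - Suc k)" unfolding excl_def L_def using card_excl[of "drop (Suc k) ps"] by simp
  have "card ({fst p} \<union> excl) \<le> 1 + 2 * (L - Suc k)"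
    using card_Un_le[of "{fst p}" excl] ce by simp
  moreover have "card {1..N} - card ({fst p} \<union> excl) \<le> card S"
    unfolding S_def by (rule diff_card_le_card_Diff) (simp add: excl_def)
  ultimately have "N - (1 + 2 * (L - Suc k)) \<le> card S" by simp
  then have Blt: "B - 1 < length (sorted_list_of_set S)" using Brange by auto
  define t where "t = sorted_list_of_set S ! (B - 1)"
  have tS: "t \<in> S" unfolding t_def using Blt nth_mem[OF Blt] by (simp add: S_def)
  then have t: "t \<in> {1..N}" "t \<noteq> fst p" "t \<notin> excl" unfolding S_def by auto
  have sw: "switch_iter N ps Bs g (Suc k) = switch_step N gk p excl B"
    by (simp add: gk_def p_def excl_def B_def)
  note st = step_lemma[OF IH(1) pin t(1) t(2) t_def[unfolded S_def], folded sw]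
  let ?g' = "switch_iter N ps Bs g (Suc k)"
  have A1: "?g' \<in> perfect_matchings N" using st(1) .
  have A2: "\<forall>j. Suc k \<le> j \<and> j < length ps \<longrightarrow> ps ! j \<in> ?g'"
  proof (intro allI impI)
    fix j assume j: "Suc k \<le> j \<and> j < length ps"
    then have inj: "ps ! j \<in> gk" using IH(2) L_def by auto
    have "drop (Suc k) ps ! (j - Suc k) = ps ! j" using j by simp
    moreover have "j - Suc k < length (drop (Suc k) ps)" using j by auto
    ultimately have "ps ! j \<in> set (drop (Suc k) ps)" by (metis nth_mem)
    then have sub: "pend (ps ! j) \<subseteq> excl" unfolding excl_def pend_def by blast
    have "ps ! j \<noteq> p" unfolding p_def using dps j kL L_def by (simp add: nth_eq_iff_index_eq)
    moreover have "ps ! j \<noteq> edge t (partner gk t)" using sub t(3) by auto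
    ultimately show "ps ! j \<in> ?g'" using st(2) inj by blast
  qed
  have A3: "\<exists>T. finite T \<and> card T \<le> Suc k \<and> (\<forall>y\<in>g - ?g'. y \<in> set ps \<or> (\<exists>w\<in>T. w \<in> pend y))"
  proof -
    obtain T where T: "finite T" "card T \<le> k" "\<forall>y\<in>g - gk. y \<in> set ps \<or> (\<exists>w\<in>T. w \<in> pend y)"
      using IH(3) by blast
    have "finite (insert t T)" "card (insert t T) \<le> Suc k" using T by (auto simp: card_insert_if)
    moreover have "\<forall>y\<in>g - ?g'. y \<in> set ps \<or> (\<exists>w\<in>insert t T. w \<in> pend y)"
    proof
      fix y assume y: "y \<in> g - ?g'"
      show "y \<in> set ps \<or> (\<exists>w\<in>insert t T. w \<in> pend y)"
      proof (cases "y \<in> gk")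
        case True
        then have "y = p \<or> y = edge t (partner gk t)" using st(3) y by blast
        then show ?thesis using pset by auto
      next
        case False then show ?thesis using T(3) y by blast
      qed
    qed
    ultimately show ?thesis by blast
  qed
  have A4: "\<forall>y\<in>?g' - g. \<exists>p\<in>set ps. fst p \<in> pend y \<or> snd p \<in> pend y"
  proof
    fix y assume y: "y \<in> ?g' - g"
    show "\<exists>p\<in>set ps. fst p \<in> pend y \<or> snd p \<in> pend y"
    proof (cases "y \<in> gk")
      case True then show ?thesis using IH(4) y by blast
    next
      case False then show ?thesis using st(4) y pset by blast
    qed
  qed
  show ?case using A1 A2 A3 A4 by blast
qed

lemma pairs_list_props:
  assumes fin: "finite \<alpha>" and inj: "inj_on fst \<alpha>"
  shows "set (pairs_list \<alpha>) = \<alpha>" "distinct (pairs_list \<alpha>)" "length (pairs_list \<alpha>) = card \<alpha>"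
proof -
  define f where "f = (\<lambda>a. THE p. p \<in> \<alpha> \<and> fst p = a)"
  have f1: "\<And>p. p \<in> \<alpha> \<Longrightarrow> f (fst p) = p"
    unfolding f_def by (rule the_equality) (use inj in \<open>auto simp: inj_on_def\<close>)
  have pl: "pairs_list \<alpha> = map f (sorted_list_of_set (fst ` \<alpha>))" unfolding pairs_list_def f_def by simp
  show "set (pairs_list \<alpha>) = \<alpha>" unfolding pl using fin f1 by (auto simp: image_iff) (metis f1)
  have "inj_on f (fst ` \<alpha>)" using f1 by (auto simp: inj_on_def)
  then show "distinct (pairs_list \<alpha>)" unfolding pl using fin by (simp add: distinct_map)
  show "length (pairs_list \<alpha>) = card \<alpha>" unfolding pl using fin inj by (simp add: card_image)
qed

definition Tg :: "nat \<Rightarrow> (nat \<Rightarrow> nat) \<Rightarrow> (nat \<times> nat) set \<Rightarrow> nat \<Rightarrow> (nat \<times> nat) set set" where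
  "Tg n d M w = {\<beta> \<in> Gamma1 n d. \<beta> \<subseteq> M \<and> w \<in> ends \<beta>}"

lemma card_Tg:
  assumes "M \<in> perfect_matchings N" "N = dsum d n"
  shows "card (Tg n d M w) \<le> 1"
proof -
  have fin: "finite (Tg n d M w)" using Gamma1_finite[OF assms(2)] by (auto simp: Tg_def)
  have "\<forall>a\<in>Tg n d M w. \<forall>b\<in>Tg n d M w. a = b"
    using Uniq[OF assms(1)] unfolding Tg_def by blast
  then show ?thesis using fin by (simp add: card_le_Suc0_iff_eq)
qed

lemma card_UN_Tg:
  assumes "M \<in> perfect_matchings N" "N = dsum d n" "finite W"
  shows "card (\<Union>w\<in>W. Tg n d M w) \<le> card W"
proof -
  have "card (\<Union>w\<in>W. Tg n d M w) \<le> (\<Sum>w\<in>W. card (Tg n d M w))"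
    using assms(3) by (rule card_UN_le)
  also have "\<dots> \<le> (\<Sum>w\<in>W. 1)" by (intro sum_mono card_Tg[OF assms(1,2)])
  finally show ?thesis by simp
qed

lemma count_bound:
  assumes Nd: "N = dsum d n" and g: "g \<in> perfect_matchings N" and a: "\<alpha> \<in> Gamma1 n d" and ag: "\<alpha> \<subseteq> g"
    and Bs: "\<forall>l\<in>{1..card \<alpha>}. Bs l \<in> {1..N - 2 * (card \<alpha> - l) - 1}"
  shows "(\<Sum>\<beta>\<in>Gamma1 n d. \<bar>Ind \<beta> g - Jind N \<beta> \<alpha> Bs g\<bar>) \<le> (if \<alpha> \<in> Gamma11 n d then 4 else 6)"
proof -
  have finG: "finite (Gamma1 n d)" using Gamma1_finite[OF Nd] .
  have fin: "finite \<alpha>" using PM_elem_finite[OF g] ag finite_subset by blast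
  have inj: "inj_on fst \<alpha>"
  proof (rule inj_onI)
    fix p q assume "p \<in> \<alpha>" "q \<in> \<alpha>" "fst p = fst q"
    then show "p = q" using PM_uniq[OF g, of p q "fst p"] ag by (auto simp: pend_def)
  qed
  define ps where "ps = pairs_list \<alpha>"
  note pp = pairs_list_props[OF fin inj, folded ps_def]
  define g' where "g' = switched N \<alpha> Bs g"
  have g'def: "g' = switch_iter N ps Bs g (length ps)"
    unfolding g'_def switched_def using ag pp by (simp add: ps_def)
  have "g' \<in> perfect_matchings N
    \<and> (\<exists>T. finite T \<and> card T \<le> length ps \<and> (\<forall>y\<in>g - g'. y \<in> set ps \<or> (\<exists>w\<in>T. w \<in> pend y)))
    \<and> (\<forall>y\<in>g' - g. \<exists>p\<in>set ps. fst p \<in> pend y \<or> snd p \<in> pend y)"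
    using invariant[OF g _ pp(2), of Bs "length ps"] pp ag Bs unfolding g'def by auto
  then obtain T where g': "g' \<in> perfect_matchings N" and T: "finite T" "card T \<le> card \<alpha>"
    "\<forall>y\<in>g - g'. y \<in> \<alpha> \<or> (\<exists>w\<in>T. w \<in> pend y)"
    and A4: "\<forall>y\<in>g' - g. \<exists>p\<in>\<alpha>. fst p \<in> pend y \<or> snd p \<in> pend y"
    using pp by auto
  define R where "R = {\<beta> \<in> Gamma1 n d. \<beta> \<subseteq> g \<and> \<not> \<beta> \<subseteq> g'}"
  define A where "A = {\<beta> \<in> Gamma1 n d. \<beta> \<subseteq> g' \<and> \<not> \<beta> \<subseteq> g}"
  have pw: "\<And>\<beta>. \<beta> \<in> Gamma1 n d \<Longrightarrow> \<bar>Ind \<beta> g - Jind N \<beta> \<alpha> Bs g\<bar> =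
       (if \<beta> \<in> R then 1 else 0) + (if \<beta> \<in> A then 1 else 0)"
    unfolding Ind_def Jind_def R_def A_def g'_def by auto
  have "(\<Sum>\<beta>\<in>Gamma1 n d. \<bar>Ind \<beta> g - Jind N \<beta> \<alpha> Bs g\<bar>) =
      (\<Sum>\<beta>\<in>Gamma1 n d. (if \<beta> \<in> R then 1 else 0)) + (\<Sum>\<beta>\<in>Gamma1 n d. (if \<beta> \<in> A then 1 else 0))"
    by (simp add: pw sum.distrib)
  also have "\<dots> = real (card R) + real (card A)"
  proof -
    have "R = Gamma1 n d \<inter> R" "A = Gamma1 n d \<inter> A" unfolding R_def A_def by auto
    then show ?thesis using sum.inter_restrict[OF finG, of "\<lambda>_. (1::real)" R]
        sum.inter_restrict[OF finG, of "\<lambda>_. (1::real)" A] by simp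
  qed
  finally have X: "(\<Sum>\<beta>\<in>Gamma1 n d. \<bar>Ind \<beta> g - Jind N \<beta> \<alpha> Bs g\<bar>) = real (card R) + real (card A)" .
  have Rsub: "R \<subseteq> insert \<alpha> (\<Union>w\<in>T. Tg n d g w)"
  proof
    fix \<beta> assume b: "\<beta> \<in> R"
    then obtain y where y: "y \<in> \<beta>" "y \<in> g - g'" unfolding R_def by blast
    have bG: "\<beta> \<in> Gamma1 n d" "\<beta> \<subseteq> g" using b R_def by auto
    show "\<beta> \<in> insert \<alpha> (\<Union>w\<in>T. Tg n d g w)"
    proof (cases "y \<in> \<alpha>")
      case True
      have "fst y \<in> ends \<beta>" "fst y \<in> ends \<alpha>" using y True by (auto simp: ends_def pend_def)
      then have "\<beta> = \<alpha>" using Uniq[OF g bG(1) a bG(2) ag] by blast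
      then show ?thesis by simp
    next
      case False
      then obtain w where "w \<in> T" "w \<in> pend y" using T(3) y by blast
      then show ?thesis using bG y by (auto simp: Tg_def ends_def)
    qed
  qed
  have cR: "card R \<le> 1 + card \<alpha>"
  proof -
    have "card R \<le> card (insert \<alpha> (\<Union>w\<in>T. Tg n d g w))"
      by (rule card_mono[OF _ Rsub]) (use finG T(1) in \<open>auto simp: Tg_def\<close>)
    also have "\<dots> \<le> Suc (card (\<Union>w\<in>T. Tg n d g w))"
    proof -
      have "finite (\<Union>w\<in>T. Tg n d g w)" using finG T(1) by (auto simp: Tg_def)
      then show ?thesis by (simp add: card_insert_if)
    qed
    also have "\<dots> \<le> Suc (card T)" using card_UN_Tg[OF g Nd T(1)] by simp
    finally show ?thesis using T(2) by simp
  qed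
  have Asub: "A \<subseteq> (\<Union>w\<in>ends \<alpha>. Tg n d g' w)"
  proof
    fix \<beta> assume b: "\<beta> \<in> A"
    then obtain y where y: "y \<in> \<beta>" "y \<in> g' - g" unfolding A_def by blast
    then obtain p where p: "p \<in> \<alpha>" "fst p \<in> pend y \<or> snd p \<in> pend y" using A4 by blast
    then obtain w where "w \<in> ends \<alpha>" "w \<in> pend y" by (auto simp: ends_def pend_def)
    then show "\<beta> \<in> (\<Union>w\<in>ends \<alpha>. Tg n d g' w)" using b y unfolding A_def Tg_def ends_def by blast
  qed
  have finA: "finite A" using finG A_def by auto
  show ?thesis
  proof (cases "\<alpha> \<in> Gamma11 n d")
    case True
    then obtain s t where st: "\<alpha> = {edge s t}" by (auto simp: Gamma11_def)
    have "ends \<alpha> = {s, t}" using st by (simp add: ends_def)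
    then have "card A \<le> card (\<Union>w\<in>{s, t}. Tg n d g' w)"
      using Asub by (intro card_mono) (use finG in \<open>auto simp: Tg_def\<close>)
    also have "\<dots> \<le> card {s, t}" by (rule card_UN_Tg[OF g' Nd]) simp
    also have "\<dots> \<le> 2" by (simp add: card_insert_le_m1)
    finally have "card A \<le> 2" .
    moreover have "card R \<le> 2" using cR st by simp
    ultimately show ?thesis using X True by simp
  next
    case False
    then have "\<alpha> \<in> Gamma12 n d" using a by (simp add: Gamma1_def)
    then obtain s t u v k where st: "\<alpha> = {edge s u, edge t v}" "d k = 2" "1 \<le> k"
      "u \<in> half_edges d k" "v \<in> half_edges d k"
      by (auto simp: Gamma12_def)
    have "ends \<alpha> = {s, u, t, v}" using st by (auto simp: ends_def)
    moreover have "Tg n d g' v \<subseteq> Tg n d g' u"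
    proof
      fix \<beta> assume "\<beta> \<in> Tg n d g' v"
      then show "\<beta> \<in> Tg n d g' u" using sib[of \<beta> n d v k] st by (auto simp: Tg_def)
    qed
    ultimately have "A \<subseteq> (\<Union>w\<in>{s, u, t}. Tg n d g' w)" using Asub by auto
    then have "card A \<le> card (\<Union>w\<in>{s, u, t}. Tg n d g' w)"
      by (intro card_mono) (use finG in \<open>auto simp: Tg_def\<close>)
    also have "\<dots> \<le> card {s, u, t}" by (rule card_UN_Tg[OF g' Nd]) simp
    also have "\<dots> \<le> 3" by (simp add: card_insert_le_m1)
    finally have "card A \<le> 3" .
    moreover have "card \<alpha> \<le> 2" using st by (simp add: card_insert_le_m1)
    then have "card R \<le> 3" using cR by simp
    ultimately show ?thesis using X False by simp
  qed
qed

definition sw :: "nat \<Rightarrow> nat \<Rightarrow> nat \<Rightarrow> nat" where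
  "sw x y z = (if z = x then y else if z = y then x else z)"

definition phi :: "nat \<Rightarrow> nat \<Rightarrow> (nat \<times> nat) set \<Rightarrow> (nat \<times> nat) set" where
  "phi x y g = (\<lambda>p. edge (sw x y (fst p)) (sw x y (snd p))) ` g"

lemma sw_sw[simp]: "sw x y (sw x y z) = z" by (auto simp: sw_def)
lemma sw_inj: "sw x y u = sw x y v \<longleftrightarrow> u = v" by (metis sw_sw)
lemma sw_range: "x \<in> {1..N} \<Longrightarrow> y \<in> {1..N} \<Longrightarrow> z \<in> {1..N} \<Longrightarrow> sw x y z \<in> {1..N}"
  by (auto simp: sw_def)

lemma edge_fun: "edge (f (fst (edge u v))) (f (snd (edge u v))) = edge (f u) (f v)"
  by (cases "u \<le> v") (auto simp: edge_def min_def max_def)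

lemma phi_phi:
  assumes "g \<in> perfect_matchings N" shows "phi x y (phi x y g) = g"
proof -
  have "\<And>p. p \<in> g \<Longrightarrow> edge (sw x y (fst (edge (sw x y (fst p)) (sw x y (snd p)))))
      (sw x y (snd (edge (sw x y (fst p)) (sw x y (snd p))))) = p"
  proof -
    fix p assume "p \<in> g"
    then have "fst p < snd p" using PM_pair[OF assms] by blast
    then show "edge (sw x y (fst (edge (sw x y (fst p)) (sw x y (snd p)))))
      (sw x y (snd (edge (sw x y (fst p)) (sw x y (snd p))))) = p"
      by (simp add: edge_fun edge_id)
  qed
  then show ?thesis unfolding phi_def image_image by simp
qed

lemma pend_phi: "pend (edge (sw x y (fst p)) (sw x y (snd p))) = sw x y ` pend p"
  unfolding pend_edge by (simp add: pend_def)

lemma phi_PM: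
  assumes g: "g \<in> perfect_matchings N" and xy: "x \<in> {1..N}" "y \<in> {1..N}"
  shows "phi x y g \<in> perfect_matchings N"
  unfolding PM_iff
proof (intro conjI)
  show "\<forall>p\<in>phi x y g. fst p < snd p \<and> fst p \<in> {1..N} \<and> snd p \<in> {1..N}"
  proof
    fix p assume "p \<in> phi x y g"
    then obtain q where q: "q \<in> g" "p = edge (sw x y (fst q)) (sw x y (snd q))" unfolding phi_def by blast
    have "fst q < snd q" "fst q \<in> {1..N}" "snd q \<in> {1..N}" using PM_pair[OF g q(1)] by auto
    moreover then have "sw x y (fst q) \<noteq> sw x y (snd q)" by (simp add: sw_inj)
    ultimately show "fst p < snd p \<and> fst p \<in> {1..N} \<and> snd p \<in> {1..N}"
      using q(2) sw_range[OF xy] by (auto simp: edge_def min_def max_def)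
  qed
  show "\<forall>z\<in>{1..N}. \<exists>p\<in>phi x y g. z \<in> pend p"
  proof
    fix z assume z: "z \<in> {1..N}"
    obtain q where q: "q \<in> g" "sw x y z \<in> pend q" using PM_cover[OF g sw_range[OF xy z]] by blast
    then have "z \<in> pend (edge (sw x y (fst q)) (sw x y (snd q)))" unfolding pend_phi
      by (metis image_eqI sw_sw)
    then show "\<exists>p\<in>phi x y g. z \<in> pend p" using q unfolding phi_def by blast
  qed
  show "\<forall>p\<in>phi x y g. \<forall>q\<in>phi x y g. pend p \<inter> pend q \<noteq> {} \<longrightarrow> p = q"
  proof (intro ballI impI)
    fix p q assume p: "p \<in> phi x y g" and q: "q \<in> phi x y g" and pq: "pend p \<inter> pend q \<noteq> {}"
    obtain p' where p': "p' \<in> g" "p = edge (sw x y (fst p')) (sw x y (snd p'))" using p unfolding phi_def by blast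
    obtain q' where q': "q' \<in> g" "q = edge (sw x y (fst q')) (sw x y (snd q'))" using q unfolding phi_def by blast
    have "pend p' \<inter> pend q' \<noteq> {}" using pq unfolding p'(2) q'(2) pend_phi by (auto simp: sw_inj)
    then have "p' = q'" using PM_uniq[OF g p'(1) q'(1)] by blast
    then show "p = q" using p' q' by simp
  qed
qed

lemma swap_card:
  assumes xy: "x \<in> {1..N}" "y \<in> {1..N}" and a: "a \<noteq> x" "a \<noteq> y"
    and F: "\<forall>q\<in>F. fst q < snd q \<and> x \<notin> pend q \<and> y \<notin> pend q"
  shows "card {g \<in> perfect_matchings N. F \<subseteq> g \<and> edge a x \<in> g}
       \<le> card {g \<in> perfect_matchings N. F \<subseteq> g \<and> edge a y \<in> g}"
proof (rule card_inj_on_le[of "phi x y"])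
  show "inj_on (phi x y) {g \<in> perfect_matchings N. F \<subseteq> g \<and> edge a x \<in> g}"
    by (rule inj_onI) (metis (no_types, lifting) mem_Collect_eq phi_phi)
  show "finite {g \<in> perfect_matchings N. F \<subseteq> g \<and> edge a y \<in> g}" using PM_finite by simp
  show "phi x y ` {g \<in> perfect_matchings N. F \<subseteq> g \<and> edge a x \<in> g}
      \<subseteq> {g \<in> perfect_matchings N. F \<subseteq> g \<and> edge a y \<in> g}"
  proof safe
    fix g assume g: "g \<in> perfect_matchings N" "F \<subseteq> g" "edge a x \<in> g"
    show "phi x y g \<in> perfect_matchings N" using phi_PM[OF g(1) xy] .
    show "edge a y \<in> phi x y g"
    proof -
      have "edge (sw x y (fst (edge a x))) (sw x y (snd (edge a x))) \<in> phi x y g"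
        using g(3) unfolding phi_def by blast
      moreover have "edge (sw x y a) (sw x y x) = edge a y" using a by (simp add: sw_def)
      ultimately show ?thesis by (simp add: edge_fun)
    qed
    fix q assume q: "q \<in> F"
    have "edge (sw x y (fst q)) (sw x y (snd q)) \<in> phi x y g" using g(2) q unfolding phi_def by blast
    moreover have "edge (sw x y (fst q)) (sw x y (snd q)) = q"
      using F q by (auto simp: sw_def pend_def edge_id)
    ultimately show "q \<in> phi x y g" by simp
  qed
qed

lemma sum_card:
  assumes C: "C \<subseteq> {1..N}" "a \<notin> C"
  shows "(\<Sum>c\<in>C. card {g \<in> perfect_matchings N. F \<subseteq> g \<and> edge a c \<in> g})
      \<le> card {g \<in> perfect_matchings N. F \<subseteq> g}"
proof -
  have finC: "finite C" using C finite_subset by blast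
  have "(\<Sum>c\<in>C. card {g \<in> perfect_matchings N. F \<subseteq> g \<and> edge a c \<in> g})
      = card (\<Union>c\<in>C. {g \<in> perfect_matchings N. F \<subseteq> g \<and> edge a c \<in> g})"
  proof (rule card_UN_disjoint[symmetric])
    show "finite C" by (rule finC)
    show "\<forall>i\<in>C. finite {g \<in> perfect_matchings N. F \<subseteq> g \<and> edge a i \<in> g}" using PM_finite by simp
    show "\<forall>i\<in>C. \<forall>j\<in>C. i \<noteq> j \<longrightarrow> {g \<in> perfect_matchings N. F \<subseteq> g \<and> edge a i \<in> g} \<inter>
        {g \<in> perfect_matchings N. F \<subseteq> g \<and> edge a j \<in> g} = {}"
    proof (intro ballI impI)
      fix i j assume ij: "i \<in> C" "j \<in> C" "i \<noteq> j"
      show "{g \<in> perfect_matchings N. F \<subseteq> g \<and> edge a i \<in> g} \<inter>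
        {g \<in> perfect_matchings N. F \<subseteq> g \<and> edge a j \<in> g} = {}"
      proof (rule ccontr)
        assume "\<not> ?thesis"
        then obtain g where g: "g \<in> perfect_matchings N" "edge a i \<in> g" "edge a j \<in> g" by blast
        have "edge a i = edge a j" using PM_uniq[OF g(1) g(2) g(3), of a] by simp
        then have "{a, i} = {a, j}" by (metis pend_edge)
        then show False using ij C(2) by (auto simp: doubleton_eq_iff)
      qed
    qed
  qed
  also have "\<dots> \<le> card {g \<in> perfect_matchings N. F \<subseteq> g}"
    by (rule card_mono) (use PM_finite in auto)
  finally show ?thesis .
qed

lemma prob1:
  assumes ab: "a < b" "a \<in> {1..N}" "b \<in> {1..N}"
  shows "(N - 1) * card {g \<in> perfect_matchings N. (a, b) \<in> g} \<le> card (perfect_matchings N)"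
proof -
  let ?C = "{1..N} - {a}"
  have "(N - 1) * card {g \<in> perfect_matchings N. (a, b) \<in> g}
      = (\<Sum>c\<in>?C. card {g \<in> perfect_matchings N. {} \<subseteq> g \<and> edge a b \<in> g})"
    using ab by (simp add: edge_id)
  also have "\<dots> \<le> (\<Sum>c\<in>?C. card {g \<in> perfect_matchings N. {} \<subseteq> g \<and> edge a c \<in> g})"
    by (intro sum_mono swap_card) (use ab in auto)
  also have "\<dots> \<le> card {g \<in> perfect_matchings N. {} \<subseteq> g}" by (rule sum_card) auto
  finally show ?thesis by simp
qed

lemma prob2:
  assumes r: "a1 < b1" "a2 < b2" "a1 \<in> {1..N}" "b1 \<in> {1..N}" "a2 \<in> {1..N}" "b2 \<in> {1..N}"
    and dist: "a2 \<noteq> a1" "a2 \<noteq> b1" "b2 \<noteq> a1" "b2 \<noteq> b1"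
  shows "(N - 1) * ((N - 3) * card {g \<in> perfect_matchings N. (a1, b1) \<in> g \<and> (a2, b2) \<in> g})
     \<le> card (perfect_matchings N)"
proof -
  let ?C = "{1..N} - {a1, b1, a2}"
  have cC: "card ?C = N - 3" using r dist by (simp add: card_Diff_subset)
  have "(N - 3) * card {g \<in> perfect_matchings N. (a1, b1) \<in> g \<and> (a2, b2) \<in> g}
      = (\<Sum>c\<in>?C. card {g \<in> perfect_matchings N. {(a1, b1)} \<subseteq> g \<and> edge a2 b2 \<in> g})"
    using r cC by (simp add: edge_id)
  also have "\<dots> \<le> (\<Sum>c\<in>?C. card {g \<in> perfect_matchings N. {(a1, b1)} \<subseteq> g \<and> edge a2 c \<in> g})"
    by (intro sum_mono swap_card) (use r dist in \<open>auto simp: pend_def\<close>)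
  also have "\<dots> \<le> card {g \<in> perfect_matchings N. {(a1, b1)} \<subseteq> g}" by (rule sum_card) auto
  finally have "(N - 3) * card {g \<in> perfect_matchings N. (a1, b1) \<in> g \<and> (a2, b2) \<in> g}
      \<le> card {g \<in> perfect_matchings N. (a1, b1) \<in> g}" by simp
  then have "(N - 1) * ((N - 3) * card {g \<in> perfect_matchings N. (a1, b1) \<in> g \<and> (a2, b2) \<in> g})
      \<le> (N - 1) * card {g \<in> perfect_matchings N. (a1, b1) \<in> g}" by simp
  also have "\<dots> \<le> card (perfect_matchings N)" using prob1 r by blast
  finally show ?thesis .
qed

lemma PM_nonempty:
  assumes "even N" shows "perfect_matchings N \<noteq> {}"
proof -
  define g0 where "g0 = (\<lambda>i. (2 * i + 1, 2 * i + 2)) ` {..<N div 2}"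
  have "g0 \<in> perfect_matchings N" unfolding PM_iff
  proof (intro conjI)
    show "\<forall>p\<in>g0. fst p < snd p \<and> fst p \<in> {1..N} \<and> snd p \<in> {1..N}"
      using assms by (auto simp: g0_def elim!: evenE)
    show "\<forall>x\<in>{1..N}. \<exists>p\<in>g0. x \<in> pend p"
    proof
      fix x assume x: "x \<in> {1..N}"
      define i where "i = (x - 1) div 2"
      have "i < N div 2" using x assms unfolding i_def by (auto elim!: evenE)
      moreover have "x = 2 * i + 1 \<or> x = 2 * i + 2" using x unfolding i_def by auto
      ultimately show "\<exists>p\<in>g0. x \<in> pend p" unfolding g0_def pend_def by auto
    qed
    show "\<forall>p\<in>g0. \<forall>q\<in>g0. pend p \<inter> pend q \<noteq> {} \<longrightarrow> p = q"
      unfolding g0_def pend_def by auto presburger+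
  qed
  then show ?thesis by blast
qed

lemma card_Gamma1_le2:
  assumes "\<alpha> \<in> Gamma1 n d" shows "card \<alpha> \<le> 2"
  using assms unfolding Gamma1_def Gamma11_def Gamma12_def by (auto simp: card_insert_le_m1)

lemma set_coupling:
  assumes Nd: "N = dsum d n" and ev: "even N"
  shows "set_pmf (coupling_law N d n) = perfect_matchings N \<times> PiE_dflt (Gamma1 n d) (\<lambda>_. 0) (set_pmf \<circ> B_law N)"
  unfolding coupling_law_def
  using PM_finite PM_nonempty[OF ev] Gamma1_finite[OF Nd] by (simp add: set_Pi_pmf)

lemma B_valid:
  assumes Nd: "N = dsum d n" and ev: "even N" and N3: "N > 3" and a: "\<alpha> \<in> Gamma1 n d"
    and gB: "(g, B) \<in> set_pmf (coupling_law N d n)"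
  shows "g \<in> perfect_matchings N" "\<forall>l\<in>{1..card \<alpha>}. B \<alpha> l \<in> {1..N - 2 * (card \<alpha> - l) - 1}"
proof -
  show "g \<in> perfect_matchings N" using gB set_coupling[OF Nd ev] by auto
  have "B \<in> PiE_dflt (Gamma1 n d) (\<lambda>_. 0) (set_pmf \<circ> B_law N)" using gB set_coupling[OF Nd ev] by auto
  then have Ba: "B \<alpha> \<in> set_pmf (B_law N \<alpha>)" using a by (auto simp: PiE_dflt_def)
  have c2: "card \<alpha> \<le> 2" using card_Gamma1_le2[OF a] .
  show "\<forall>l\<in>{1..card \<alpha>}. B \<alpha> l \<in> {1..N - 2 * (card \<alpha> - l) - 1}"
  proof
    fix l assume l: "l \<in> {1..card \<alpha>}"
    have ne: "{1..N - 2 * (card \<alpha> - l) - 1} \<noteq> {}" using l c2 N3 by auto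
    have "B \<alpha> \<in> PiE_dflt {1..card \<alpha>} 0 (set_pmf \<circ> (\<lambda>l. pmf_of_set {1..N - 2 * (card \<alpha> - l) - 1}))"
      using Ba unfolding B_law_def by (simp add: set_Pi_pmf)
    then have "B \<alpha> l \<in> set_pmf (pmf_of_set {1..N - 2 * (card \<alpha> - l) - 1})" using l by (auto simp: PiE_dflt_def)
    then show "B \<alpha> l \<in> {1..N - 2 * (card \<alpha> - l) - 1}" using ne by simp
  qed
qed

lemma finite_coupling:
  assumes Nd: "N = dsum d n" and ev: "even N" and N3: "N > 3"
  shows "finite (set_pmf (coupling_law N d n))"
proof -
  have "finite (PiE_dflt (Gamma1 n d) (\<lambda>_. 0) (set_pmf \<circ> B_law N))"
  proof (rule finite_PiE_dflt)
    show "finite (Gamma1 n d)" using Gamma1_finite[OF Nd] .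
    fix \<alpha> assume a: "\<alpha> \<in> Gamma1 n d"
    have c2: "card \<alpha> \<le> 2" using card_Gamma1_le2[OF a] .
    show "finite ((set_pmf \<circ> B_law N) \<alpha>)"
      unfolding B_law_def o_def
    proof (subst set_Pi_pmf, simp, rule finite_PiE_dflt, simp)
      fix l assume l: "l \<in> {1..card \<alpha>}"
      have ne: "{1..N - 2 * (card \<alpha> - l) - 1} \<noteq> {}" using l c2 N3 by auto
      then show "finite ((set_pmf \<circ> (\<lambda>l. pmf_of_set {1..N - 2 * (card \<alpha> - l) - 1})) l)" by simp
    qed
  qed
  then show ?thesis unfolding set_coupling[OF Nd ev] using PM_finite by simp
qed

lemma expect_bound:
  assumes Nd: "N = dsum d n" and ev: "even N" and N3: "N > 3" and a: "\<alpha> \<in> Gamma1 n d"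
  shows "measure_pmf.expectation (coupling_law N d n)
           (\<lambda>(g, B). Ind \<alpha> g
              * (\<Sum>\<beta>\<in>Gamma1 n d. \<bar>Ind \<beta> g - Jind N \<beta> \<alpha> (B \<alpha>) g\<bar>)
              * (\<Sum>\<gamma>\<in>Gamma1 n d. \<bar>Ind \<gamma> g - Jind N \<gamma> \<alpha> (B \<alpha>) g\<bar>))
     \<le> (if \<alpha> \<in> Gamma11 n d then 16 else 36) * (real (card {g \<in> perfect_matchings N. \<alpha> \<subseteq> g}) / real (card (perfect_matchings N)))"
proof -
  define K :: real where "K = (if \<alpha> \<in> Gamma11 n d then 16 else 36)"
  let ?f = "(\<lambda>(g, B). Ind \<alpha> g
              * (\<Sum>\<beta>\<in>Gamma1 n d. \<bar>Ind \<beta> g - Jind N \<beta> \<alpha> (B \<alpha>) g\<bar>)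
              * (\<Sum>\<gamma>\<in>Gamma1 n d. \<bar>Ind \<gamma> g - Jind N \<gamma> \<alpha> (B \<alpha>) g\<bar>))"
  let ?h = "(\<lambda>x. K * Ind \<alpha> (fst x)) :: (nat \<times> nat) set \<times> ((nat \<times> nat) set \<Rightarrow> nat \<Rightarrow> nat) \<Rightarrow> real"
  have fin: "finite (set_pmf (coupling_law N d n))" using finite_coupling[OF Nd ev N3] .
  have "measure_pmf.expectation (coupling_law N d n) ?f \<le> measure_pmf.expectation (coupling_law N d n) ?h"
  proof (rule integral_mono_AE)
    show "integrable (measure_pmf (coupling_law N d n)) ?f" using fin by (rule integrable_measure_pmf_finite)
    show "integrable (measure_pmf (coupling_law N d n)) ?h" using fin by (rule integrable_measure_pmf_finite)
    show "AE x in measure_pmf (coupling_law N d n). ?f x \<le> ?h x"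
    proof (rule AE_pmfI)
      fix x assume x: "x \<in> set_pmf (coupling_law N d n)"
      obtain g B where gB: "x = (g, B)" by force
      note bv = B_valid[OF Nd ev N3 a x[unfolded gB]]
      show "?f x \<le> ?h x"
      proof (cases "\<alpha> \<subseteq> g")
        case True
        let ?X = "(\<Sum>\<beta>\<in>Gamma1 n d. \<bar>Ind \<beta> g - Jind N \<beta> \<alpha> (B \<alpha>) g\<bar>)"
        have X: "?X \<le> (if \<alpha> \<in> Gamma11 n d then 4 else 6)"
          using count_bound[OF Nd bv(1) a True bv(2)] .
        have X0: "0 \<le> ?X" by (intro sum_nonneg) simp
        have "?X * ?X \<le> K"
        proof (cases "\<alpha> \<in> Gamma11 n d")
          case True
          then have "?X \<le> 4" using X by simp
          then have "?X * ?X \<le> 4 * 4" using X0 by (intro mult_mono) auto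
          then show ?thesis using True K_def by simp
        next
          case False
          then have "?X \<le> 6" using X by simp
          then have "?X * ?X \<le> 6 * 6" using X0 by (intro mult_mono) auto
          then show ?thesis using False K_def by simp
        qed
        then show ?thesis using True gB by (simp add: Ind_def)
      next
        case False
        then show ?thesis using gB by (simp add: Ind_def)
      qed
    qed
  qed
  also have "measure_pmf.expectation (coupling_law N d n) ?h
      = measure_pmf.expectation (map_pmf fst (coupling_law N d n)) (\<lambda>g. K * Ind \<alpha> g)"
    by simp
  also have "\<dots> = measure_pmf.expectation (pmf_of_set (perfect_matchings N)) (\<lambda>g. K * Ind \<alpha> g)"
    unfolding coupling_law_def map_fst_pair_pmf ..
  also have "\<dots> = (\<Sum>g\<in>perfect_matchings N. K * Ind \<alpha> g) / real (card (perfect_matchings N))"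
    using PM_finite PM_nonempty[OF ev] by (simp add: integral_pmf_of_set sum_distrib_left)
  also have "(\<Sum>g\<in>perfect_matchings N. K * Ind \<alpha> g) = K * real (card {g \<in> perfect_matchings N. \<alpha> \<subseteq> g})"
  proof -
    have "(\<Sum>g\<in>perfect_matchings N. Ind \<alpha> g) = real (card {g \<in> perfect_matchings N. \<alpha> \<subseteq> g})"
      unfolding Ind_def using PM_finite by (simp add: sum.If_cases Int_def)
    then show ?thesis by (simp add: sum_distrib_left[symmetric])
  qed
  finally show ?thesis unfolding K_def by simp
qed

lemma final_arith:
  fixes M x y m c C11 C12 :: real
  assumes M: "M > 0" and xy: "0 \<le> x" "0 \<le> y" and m: "m = max x y" and c: "m / M \<le> c"
    and C: "0 \<le> C11" "0 \<le> C12" "2 * C11 \<le> x * x" "C12 \<le> x * x * y"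
  shows "16 * C11 / (M + 2) + 36 * C12 / ((M + 2) * M) \<le> (8 * c + 36 * c ^ 2) * m"
proof -
  have m0: "0 \<le> m" using m xy by simp
  have r0: "0 \<le> m / M" using m0 M by simp
  have xm: "x * x \<le> m * m" using m xy by (intro mult_mono) auto
  have a: "16 * C11 / (M + 2) \<le> 8 * (x * x) / M"
  proof -
    have "16 * C11 / (M + 2) \<le> 16 * C11 / M" using M C by (intro divide_left_mono) auto
    also have "\<dots> \<le> 8 * (x * x) / M" using C M by (intro divide_right_mono) auto
    finally show ?thesis .
  qed
  also have "\<dots> \<le> 8 * (m * m) / M" using xm M by (intro divide_right_mono) auto
  also have "\<dots> = 8 * m * (m / M)" by simp
  also have "\<dots> \<le> 8 * m * c" using c m0 by (intro mult_left_mono) auto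
  finally have A: "16 * C11 / (M + 2) \<le> 8 * c * m" by (simp add: mult_ac)
  have "36 * C12 / ((M + 2) * M) \<le> 36 * C12 / (M * M)" using M C by (intro divide_left_mono) auto
  also have "\<dots> \<le> 36 * (x * x * y) / (M * M)" using C M by (intro divide_right_mono) auto
  also have "\<dots> \<le> 36 * (m * m * m) / (M * M)"
  proof -
    have "y \<le> m" "x \<le> m" using m by simp_all
    then have "x * x * y \<le> m * m * m" using xm xy m0 by (intro mult_mono) auto
    then show ?thesis using M by (intro divide_right_mono) auto
  qed
  also have "\<dots> = 36 * m * ((m / M) * (m / M))" by simp
  also have "\<dots> \<le> 36 * m * (c * c)" using c r0 m0 by (intro mult_left_mono mult_mono) auto
  finally have B: "36 * C12 / ((M + 2) * M) \<le> 36 * c ^ 2 * m" by (simp add: power2_eq_square mult_ac)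
  show ?thesis using A B by (simp add: algebra_simps)
qed

definition V :: "nat \<Rightarrow> (nat \<Rightarrow> nat) \<Rightarrow> nat \<Rightarrow> nat set" where
  "V n d k = {i \<in> {1..n}. d i = k}"

definition P1 :: "nat \<Rightarrow> (nat \<Rightarrow> nat) \<Rightarrow> (nat \<times> nat) set" where
  "P1 n d = {(i, j) \<in> V n d 1 \<times> V n d 1. i < j}"

lemma card_P1: "2 * card (P1 n d) \<le> cnt n d 1 * cnt n d 1"
proof -
  let ?V = "V n d 1"
  have finV: "finite ?V" by (simp add: V_def)
  have finVV: "finite (?V \<times> ?V)" using finV by simp
  let ?Q = "{(i, j) \<in> ?V \<times> ?V. j < i}"
  have Q: "?Q = (\<lambda>(i, j). (j, i)) ` P1 n d" by (auto simp: P1_def image_iff)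
  have "card ?Q = card (P1 n d)" unfolding Q by (rule card_image) (auto simp: inj_on_def)
  moreover have "card (P1 n d \<union> ?Q) = card (P1 n d) + card ?Q"
    by (rule card_Un_disjoint) (auto simp: P1_def intro: finite_subset[OF _ finVV])
  moreover have "card (P1 n d \<union> ?Q) \<le> card (?V \<times> ?V)"
    by (rule card_mono) (use finV in \<open>auto simp: P1_def\<close>)
  ultimately show ?thesis by (simp add: card_cartesian_product cnt_def V_def)
qed

lemma card_G11: "card (Gamma11 n d) \<le> card (P1 n d)"
proof -
  have "Gamma11 n d \<subseteq> (\<lambda>(i, j). {edge (dsum d i) (dsum d j)}) ` P1 n d"
  proof
    fix x assume "x \<in> Gamma11 n d"
    then obtain s t i j where st: "x = {edge s t}" "i \<in> {1..n}" "j \<in> {1..n}" "i < j" "d i = 1" "d j = 1"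
      "s \<in> half_edges d i" "t \<in> half_edges d j" by (auto simp: Gamma11_def)
    then have "s = dsum d i" "t = dsum d j" using he1[of i d] he1[of j d] by auto
    moreover have "(i, j) \<in> P1 n d" using st by (auto simp: P1_def V_def)
    ultimately show "x \<in> (\<lambda>(i, j). {edge (dsum d i) (dsum d j)}) ` P1 n d"
      using st by (intro rev_image_eqI[of "(i, j)"]) auto
  qed
  moreover have "finite (P1 n d)" by (rule finite_subset[of _ "V n d 1 \<times> V n d 1"]) (auto simp: P1_def V_def)
  ultimately show ?thesis using card_mono[OF finite_imageI] card_image_le le_trans by metis
qed

lemma card_G12: "card (Gamma12 n d) \<le> card (P1 n d) * cnt n d 2 * 2"
proof -
  let ?f = "\<lambda>((i, j), k, b). {edge (dsum d i) (if b then dsum d k - 1 else dsum d k),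
      edge (dsum d j) (if b then dsum d k else dsum d k - 1)}"
  have "Gamma12 n d \<subseteq> ?f ` (P1 n d \<times> V n d 2 \<times> (UNIV :: bool set))"
  proof
    fix x assume "x \<in> Gamma12 n d"
    then obtain s t u v i j k where st: "x = {edge s u, edge t v}" "i \<in> {1..n}" "j \<in> {1..n}" "k \<in> {1..n}"
      "i < j" "d i = 1" "d j = 1" "d k = 2"
      "s \<in> half_edges d i" "t \<in> half_edges d j" "u \<in> half_edges d k" "v \<in> half_edges d k" "u \<noteq> v"
      by (auto simp: Gamma12_def)
    then have sv: "s = dsum d i" "t = dsum d j" using he1[of i d] he1[of j d] by auto
    have uv: "(u = dsum d k - 1 \<and> v = dsum d k) \<or> (u = dsum d k \<and> v = dsum d k - 1)"
      using st he2[of k d] by auto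
    have "((i, j), k, u = dsum d k - 1) \<in> P1 n d \<times> V n d 2 \<times> (UNIV :: bool set)"
      using st by (auto simp: P1_def V_def)
    moreover have "x = ?f ((i, j), k, u = dsum d k - 1)" using uv st sv by auto
    ultimately show "x \<in> ?f ` (P1 n d \<times> V n d 2 \<times> (UNIV :: bool set))" by blast
  qed
  moreover have "finite (P1 n d)" by (rule finite_subset[of _ "V n d 1 \<times> V n d 1"]) (auto simp: P1_def V_def)
  moreover have "finite (V n d 2)" by (simp add: V_def)
  ultimately have fin: "finite (P1 n d \<times> V n d 2 \<times> (UNIV :: bool set))" "Gamma12 n d \<subseteq> ?f ` (P1 n d \<times> V n d 2 \<times> (UNIV :: bool set))"
    by auto
  have "card (Gamma12 n d) \<le> card (?f ` (P1 n d \<times> V n d 2 \<times> (UNIV :: bool set)))"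
    by (rule card_mono[OF finite_imageI[OF fin(1)] fin(2)])
  also have "\<dots> \<le> card (P1 n d \<times> V n d 2 \<times> (UNIV :: bool set))" by (rule card_image_le[OF fin(1)])
  finally have "card (Gamma12 n d) \<le> card (P1 n d \<times> V n d 2 \<times> (UNIV :: bool set))" .
  then show ?thesis by (simp add: card_cartesian_product cnt_def V_def)
qed

lemma real_ratio_le:
  fixes a b k :: nat
  assumes "k * a \<le> b" "b > 0" "k > 0"
  shows "real a / real b \<le> 1 / real k"
proof -
  have "real k * real a \<le> real b" using assms(1) by (metis of_nat_le_iff of_nat_mult)
  then show ?thesis using assms(2,3) by (simp add: field_simps)
qed

lemma prob_G11:
  assumes Nd: "N = dsum d n" and ev: "even N" and N3: "N > 3" and a: "\<alpha> \<in> Gamma11 n d"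
  shows "real (card {g \<in> perfect_matchings N. \<alpha> \<subseteq> g}) / real (card (perfect_matchings N)) \<le> 1 / (real N - 1)"
proof -
  obtain s t i j where st: "\<alpha> = {edge s t}" "i \<in> {1..n}" "j \<in> {1..n}" "i < j"
      "s \<in> half_edges d i" "t \<in> half_edges d j" using a by (auto simp: Gamma11_def)
  have stN: "s \<in> {1..N}" "t \<in> {1..N}" using he_sub[of i n d] he_sub[of j n d] st Nd by auto
  have "s \<noteq> t" using he_unique st by blast
  define a0 b0 where "a0 = min s t" and "b0 = max s t"
  have ab: "a0 < b0" "a0 \<in> {1..N}" "b0 \<in> {1..N}" "edge s t = (a0, b0)"
    using \<open>s \<noteq> t\<close> stN by (auto simp: a0_def b0_def edge_def)
  have eq: "{g \<in> perfect_matchings N. \<alpha> \<subseteq> g} = {g \<in> perfect_matchings N. (a0, b0) \<in> g}"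
    using st ab by auto
  have pos: "card (perfect_matchings N) > 0" using PM_finite PM_nonempty[OF ev] by (simp add: card_gt_0_iff)
  have "real (card {g \<in> perfect_matchings N. \<alpha> \<subseteq> g}) / real (card (perfect_matchings N)) \<le> 1 / real (N - 1)"
    unfolding eq by (rule real_ratio_le[OF prob1[OF ab(1-3)] pos]) (use N3 in simp)
  then show ?thesis using N3 by (simp add: of_nat_diff)
qed

lemma prob_G12:
  assumes Nd: "N = dsum d n" and ev: "even N" and N3: "N > 3" and a: "\<alpha> \<in> Gamma12 n d"
  shows "real (card {g \<in> perfect_matchings N. \<alpha> \<subseteq> g}) / real (card (perfect_matchings N))
     \<le> 1 / ((real N - 1) * (real N - 3))"
proof -
  obtain s t u v i j k where st: "\<alpha> = {edge s u, edge t v}" "i \<in> {1..n}" "j \<in> {1..n}" "k \<in> {1..n}"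
      "i < j" "d i = 1" "d j = 1" "d k = 2"
      "s \<in> half_edges d i" "t \<in> half_edges d j" "u \<in> half_edges d k" "v \<in> half_edges d k" "u \<noteq> v"
    using a by (auto simp: Gamma12_def)
  have stN: "s \<in> {1..N}" "t \<in> {1..N}" "u \<in> {1..N}" "v \<in> {1..N}"
    using he_sub[of i n d] he_sub[of j n d] he_sub[of k n d] st Nd by auto
  have ik: "i \<noteq> k" "j \<noteq> k" using st by auto
  have dist: "s \<noteq> t" "s \<noteq> u" "s \<noteq> v" "t \<noteq> u" "t \<noteq> v" "u \<noteq> v"
    using he_unique st ik by (metis less_irrefl)+
  define a1 b1 a2 b2 where "a1 = min s u" and "b1 = max s u" and "a2 = min t v" and "b2 = max t v"
  have r: "a1 < b1" "a2 < b2" "a1 \<in> {1..N}" "b1 \<in> {1..N}" "a2 \<in> {1..N}" "b2 \<in> {1..N}"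
    using dist stN by (auto simp: a1_def b1_def a2_def b2_def)
  have d2: "a2 \<noteq> a1" "a2 \<noteq> b1" "b2 \<noteq> a1" "b2 \<noteq> b1"
    using dist by (auto simp: a1_def b1_def a2_def b2_def min_def max_def)
  have e: "edge s u = (a1, b1)" "edge t v = (a2, b2)" by (auto simp: a1_def b1_def a2_def b2_def edge_def)
  have eq: "{g \<in> perfect_matchings N. \<alpha> \<subseteq> g} = {g \<in> perfect_matchings N. (a1, b1) \<in> g \<and> (a2, b2) \<in> g}"
    using st e by auto
  have pos: "card (perfect_matchings N) > 0" using PM_finite PM_nonempty[OF ev] by (simp add: card_gt_0_iff)
  have "real (card {g \<in> perfect_matchings N. \<alpha> \<subseteq> g}) / real (card (perfect_matchings N)) \<le> 1 / real ((N - 1) * (N - 3))"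
    unfolding eq by (rule real_ratio_le[OF _ pos]) (use prob2[OF r d2] N3 in \<open>simp_all add: mult.assoc\<close>)
  then show ?thesis using N3 by (simp add: of_nat_diff)
qed

theorem proposition4p9:
  fixes n :: nat and d :: "nat \<Rightarrow> nat" and N :: nat and c :: real
  assumes "N = (\<Sum>i=1..n. d i)"
    and "even N"
    and "N > 3"
    and "real (max (cnt n d 1) (cnt n d 2)) / real (N - 3) \<le> c"
  shows "(\<Sum>alpha\<in>Gamma1 n d. measure_pmf.expectation (coupling_law N d n)
           (\<lambda>(g, B). Ind alpha g
              * (\<Sum>beta\<in>Gamma1 n d. \<bar>Ind beta g - Jind N beta alpha (B alpha) g\<bar>)
              * (\<Sum>gamma\<in>Gamma1 n d. \<bar>Ind gamma g - Jind N gamma alpha (B alpha) g\<bar>)))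
         \<le> (8 * c + 36 * c ^ 2) * real (max (cnt n d 1) (cnt n d 2))"
proof -
  have Nd: "N = dsum d n" using assms(1) by (simp add: dsum_def)
  note ev = assms(2) and N3 = assms(3)
  define h :: "(nat \<times> nat) set \<Rightarrow> real" where
    "h \<alpha> = (if \<alpha> \<in> Gamma11 n d then 16 / (real N - 1) else 36 / ((real N - 1) * (real N - 3)))" for \<alpha>
  have each: "measure_pmf.expectation (coupling_law N d n)
           (\<lambda>(g, B). Ind alpha g
              * (\<Sum>beta\<in>Gamma1 n d. \<bar>Ind beta g - Jind N beta alpha (B alpha) g\<bar>)
              * (\<Sum>gamma\<in>Gamma1 n d. \<bar>Ind gamma g - Jind N gamma alpha (B alpha) g\<bar>)) \<le> h alpha"
    if a: "alpha \<in> Gamma1 n d" for alpha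
  proof -
    note eb = expect_bound[OF Nd ev N3 a]
    show ?thesis
    proof (cases "alpha \<in> Gamma11 n d")
      case True
      have "16 * (real (card {g \<in> perfect_matchings N. alpha \<subseteq> g}) / real (card (perfect_matchings N)))
          \<le> 16 * (1 / (real N - 1))" using prob_G11[OF Nd ev N3 True] by simp
      then show ?thesis using eb True unfolding h_def by simp
    next
      case False
      then have a12: "alpha \<in> Gamma12 n d" using a by (simp add: Gamma1_def)
      have "36 * (real (card {g \<in> perfect_matchings N. alpha \<subseteq> g}) / real (card (perfect_matchings N)))
          \<le> 36 * (1 / ((real N - 1) * (real N - 3)))" using prob_G12[OF Nd ev N3 a12] by simp
      then show ?thesis using eb False unfolding h_def by simp
    qed
  qed
  have finG: "finite (Gamma1 n d)" using Gamma1_finite[OF Nd] .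
  have fin11: "finite (Gamma11 n d)" "finite (Gamma12 n d)" using finG by (auto simp: Gamma1_def)
  have "(\<Sum>alpha\<in>Gamma1 n d. measure_pmf.expectation (coupling_law N d n)
           (\<lambda>(g, B). Ind alpha g
              * (\<Sum>beta\<in>Gamma1 n d. \<bar>Ind beta g - Jind N beta alpha (B alpha) g\<bar>)
              * (\<Sum>gamma\<in>Gamma1 n d. \<bar>Ind gamma g - Jind N gamma alpha (B alpha) g\<bar>)))
      \<le> (\<Sum>alpha\<in>Gamma1 n d. h alpha)" by (rule sum_mono) (rule each)
  also have "\<dots> = (\<Sum>alpha\<in>Gamma11 n d. h alpha) + (\<Sum>alpha\<in>Gamma12 n d - Gamma11 n d. h alpha)"
  proof -
    have "sum h (Gamma11 n d \<union> (Gamma12 n d - Gamma11 n d)) = sum h (Gamma11 n d) + sum h (Gamma12 n d - Gamma11 n d)"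
      by (rule sum.union_disjoint) (use fin11 in auto)
    moreover have "Gamma11 n d \<union> (Gamma12 n d - Gamma11 n d) = Gamma1 n d" by (auto simp: Gamma1_def)
    ultimately show ?thesis by (simp only:)
  qed
  also have "\<dots> = real (card (Gamma11 n d)) * (16 / (real N - 1))
      + real (card (Gamma12 n d - Gamma11 n d)) * (36 / ((real N - 1) * (real N - 3)))"
    unfolding h_def by simp
  also have "\<dots> \<le> real (card (Gamma11 n d)) * (16 / (real N - 1))
      + real (card (Gamma12 n d)) * (36 / ((real N - 1) * (real N - 3)))"
  proof -
    have "card (Gamma12 n d - Gamma11 n d) \<le> card (Gamma12 n d)" using fin11 by (simp add: card_mono)
    then have "real (card (Gamma12 n d - Gamma11 n d)) \<le> real (card (Gamma12 n d))" by simp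
    moreover have "0 \<le> 36 / ((real N - 1) * (real N - 3))" using N3 by simp
    ultimately have "real (card (Gamma12 n d - Gamma11 n d)) * (36 / ((real N - 1) * (real N - 3)))
       \<le> real (card (Gamma12 n d)) * (36 / ((real N - 1) * (real N - 3)))" by (rule mult_right_mono)
    then show ?thesis by linarith
  qed
  also have "\<dots> = 16 * real (card (Gamma11 n d)) / ((real N - 3) + 2)
      + 36 * real (card (Gamma12 n d)) / (((real N - 3) + 2) * (real N - 3))" by (simp add: mult.commute)
  also have "\<dots> \<le> (8 * c + 36 * c ^ 2) * max (real (cnt n d 1)) (real (cnt n d 2))"
  proof (rule final_arith)
    show "real N - 3 > 0" using N3 by simp
    show "max (real (cnt n d 1)) (real (cnt n d 2)) / (real N - 3) \<le> c"
      using assms(4) N3 by (simp add: of_nat_diff)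
    have P: "2 * card (P1 n d) \<le> cnt n d 1 * cnt n d 1" by (rule card_P1)
    have "2 * card (Gamma11 n d) \<le> cnt n d 1 * cnt n d 1" using card_G11[of n d] P by simp
    then show "2 * real (card (Gamma11 n d)) \<le> real (cnt n d 1) * real (cnt n d 1)"
      by (metis of_nat_le_iff of_nat_mult of_nat_numeral)
    have "card (Gamma12 n d) \<le> card (P1 n d) * cnt n d 2 * 2" by (rule card_G12)
    also have "\<dots> = 2 * card (P1 n d) * cnt n d 2" by simp
    also have "\<dots> \<le> cnt n d 1 * cnt n d 1 * cnt n d 2" using P by (intro mult_right_mono) auto
    finally show "real (card (Gamma12 n d)) \<le> real (cnt n d 1) * real (cnt n d 1) * real (cnt n d 2)"
      by (metis of_nat_le_iff of_nat_mult)
  qed auto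
  finally show ?thesis by (simp add: of_nat_max)
qed

end
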